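(* Assume the defocusing case $\mu_1\le\dots\le\mu_n<0$ (with $n\ge3$). Then there are at most finitely many possible bifurcation parameters, i.e. the set of $\beta\in(-\infty,\mu_1)\cup(\mu_n,\bar\beta)$ such that $f(\beta)=\lambda_k$ for some $k\in\mathbb N$ is finite.
   Context: Let $\Omega\subset\mathbb R^N$ ($N\le3$) be a smooth bounded domain whose principal Dirichlet eigenvalue of $-\Delta$ is less than $1$, and $\omega\in H_0^1(\Omega)$ the unique positive solution of $-\Delta\omega-\omega=-\omega^3$. Let $-1=\lambda_1<\lambda_2<\cdots\to\infty$ be the distinct eigenvalues of $-\Delta\psi-\psi=\lambda\omega^2\psi$, $\psi\in H_0^1(\Omega)$. Let $g(\beta)=1+\beta\sum_{j=1}^n\frac1{\mu_j-\beta}$, $f(\beta)=-1-\frac2{g(\beta)}$, and $\bar\beta$ the unique zero of $g$ in $(\mu_n,\infty)$. *)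

theory Defs
  imports Complex_Main
begin

definition gfun :: "(nat \<Rightarrow> real) \<Rightarrow> nat \<Rightarrow> real \<Rightarrow> real" where
  "gfun mu n \<beta> = 1 + \<beta> * (\<Sum>j=1..n. 1 / (mu j - \<beta>))"

definition ffun :: "(nat \<Rightarrow> real) \<Rightarrow> nat \<Rightarrow> real \<Rightarrow> real" where
  "ffun mu n \<beta> = -1 - 2 / gfun mu n \<beta>"

definition bar_beta :: "(nat \<Rightarrow> real) \<Rightarrow> nat \<Rightarrow> real" where
  "bar_beta mu n = (THE b. mu n < b \<and> gfun mu n b = 0)"

text \<open>Abstract interface for the distinct eigenvalues of the weighted linearized
  problem: a strictly increasing sequence indexed from 1, starting at -1,
  and tending to infinity.\<close>
definition eigen_seq :: "(nat \<Rightarrow> real) \<Rightarrow> bool" where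
  "eigen_seq lam \<longleftrightarrow> lam 1 = -1 \<and> (\<forall>k\<ge>1. lam k < lam (Suc k)) \<and> filterlim lam at_top sequentially"

end

theory Submission
  imports Defs
begin

lemma g_alt:
  assumes "\<forall>j\<in>{1..n}. mu j \<noteq> b"
  shows "gfun mu n b = 1 - real n + (\<Sum>j=1..n. mu j / (mu j - b))"
proof -
  have "gfun mu n b = 1 + (\<Sum>j=1..n. b / (mu j - b))"
    unfolding gfun_def by (simp add: sum_distrib_left)
  also have "(\<Sum>j=1..n. b / (mu j - b)) = (\<Sum>j=1..n. mu j / (mu j - b) - 1)"
  proof (rule sum.cong)
    fix j assume "j \<in> {1..n}"
    then have "mu j - b \<noteq> 0" using assms by auto
    then show "b / (mu j - b) = mu j / (mu j - b) - 1" by (simp add: field_simps)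
  qed simp
  also have "\<dots> = (\<Sum>j=1..n. mu j / (mu j - b)) - real n" by (simp add: sum_subtractf)
  finally show ?thesis by simp
qed

lemma t2: fixes m a b :: real assumes "m < a" "a < b" "m < 0"
  shows "m / (m - b) < m / (m - a)"
proof -
  have "0 < (m-b)*(m-a)" using assms by (intro mult_neg_neg) auto
  then show ?thesis using assms by (intro divide_strict_left_mono_neg) auto
qed
lemma t1: fixes m a b :: real assumes "a < b" "b < m" "m < 0"
  shows "m / (m - b) < m / (m - a)"
proof -
  have "0 < (m-b)*(m-a)" using assms by (intro mult_pos_pos) auto
  then show ?thesis using assms by (intro divide_strict_left_mono_neg) auto
qed
lemma t3: fixes m M :: real assumes "m < 0" "M > 0"
  shows "m / (m - M) < - m / M"
proof -
  have e: "m / (m - M) = (-m) / (M - m)" by (metis minus_diff_eq minus_divide_divide)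
  have "0 < (M-m)*M" using assms by (intro mult_pos_pos) auto
  then have "(-m) / (M - m) < (-m) / M" using assms by (intro divide_strict_left_mono) auto
  then show ?thesis using e by simp
qed

lemma t4: fixes g :: real assumes "g < -2" shows "-1 - 2/g \<le> 0"
proof -
  have "2 / (-g) < 1" using assms by (subst divide_less_eq) auto
  moreover have "2 / (-g) = - (2/g)" by (rule minus_divide_right[symmetric])
  ultimately show ?thesis by linarith
qed
lemma t5: fixes g :: real assumes "g > 0" shows "-1 - 2/g \<le> 0"
  using divide_pos_pos[of 2 g] assms by linarith

lemma subsing_finite:
  assumes "\<And>x y. P x \<Longrightarrow> P y \<Longrightarrow> x = (y::real)"
  shows "finite {x. P x}"
proof (cases "\<exists>x. P x")
  case True
  then obtain x where "P x" by blast
  then have "{x. P x} = {x}" using assms by blast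
  then show ?thesis by simp
qed simp

lemma f_inj:
  assumes "ffun mu n a = ffun mu n b"
  shows "gfun mu n a = gfun mu n b"
proof -
  have "2 / gfun mu n a = 2 / gfun mu n b" using assms unfolding ffun_def by simp
  then show ?thesis by (simp add: divide_inverse)
qed

theorem lemma3p4:
  fixes mu :: "nat \<Rightarrow> real" and n :: nat and lam :: "nat \<Rightarrow> real"
  assumes "n \<ge> 3"
    and "\<And>i j. 1 \<le> i \<Longrightarrow> i \<le> j \<Longrightarrow> j \<le> n \<Longrightarrow> mu i \<le> mu j"
    and "mu n < 0"
    and "eigen_seq lam"
  shows "finite {\<beta>. (\<beta> < mu 1 \<or> (mu n < \<beta> \<and> \<beta> < bar_beta mu n))
                    \<and> (\<exists>k\<ge>1. ffun mu n \<beta> = lam k)}"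
proof -
  have mun: "\<And>j. j \<in> {1..n} \<Longrightarrow> mu j \<le> mu n" using assms(1,2) by auto
  have mu1: "\<And>j. j \<in> {1..n} \<Longrightarrow> mu 1 \<le> mu j" using assms(2) by auto
  have neg: "\<And>j. j \<in> {1..n} \<Longrightarrow> mu j < 0" using mun assms(3) by force
  have ne: "{1..n} \<noteq> {}" using assms(1) by auto
  have mono2: "gfun mu n b < gfun mu n a" if "mu n < a" "a < b" for a b
  proof -
    have "(\<Sum>j=1..n. mu j / (mu j - b)) < (\<Sum>j=1..n. mu j / (mu j - a))"
    proof (rule sum_strict_mono)
      fix j assume j: "j \<in> {1..n}"
      have "mu j < a" using mun[OF j] that by linarith
      moreover have "mu j < 0" using neg[OF j] .
      ultimately show "mu j / (mu j - b) < mu j / (mu j - a)"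
        using that t1 t2 by auto
    qed (use ne in auto)
    moreover have "\<forall>j\<in>{1..n}. mu j \<noteq> a" "\<forall>j\<in>{1..n}. mu j \<noteq> b"
      using mun that by force+
    ultimately show ?thesis using g_alt by simp
  qed
  have mono1: "gfun mu n b < gfun mu n a" if "a < b" "b < mu 1" for a b
  proof -
    have "(\<Sum>j=1..n. mu j / (mu j - b)) < (\<Sum>j=1..n. mu j / (mu j - a))"
    proof (rule sum_strict_mono)
      fix j assume j: "j \<in> {1..n}"
      have "b < mu j" using mu1[OF j] that by linarith
      moreover have "mu j < 0" using neg[OF j] .
      ultimately show "mu j / (mu j - b) < mu j / (mu j - a)"
        using that t1 t2 by auto
    qed (use ne in auto)
    moreover have "\<forall>j\<in>{1..n}. mu j \<noteq> a" "\<forall>j\<in>{1..n}. mu j \<noteq> b"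
      using mu1 that by force+
    ultimately show ?thesis using g_alt by simp
  qed
  define M where "M = - (\<Sum>j=1..n. mu j)"
  have Mpos: "M > 0" unfolding M_def using sum_strict_mono[of "{1..n}" mu "\<lambda>_. 0"] neg ne by simp
  have g0: "gfun mu n 0 = 1" unfolding gfun_def by simp
  have gM: "gfun mu n M < 0"
  proof -
    have "(\<Sum>j=1..n. mu j / (mu j - M)) < (\<Sum>j=1..n. - mu j / M)"
    proof (rule sum_strict_mono)
      fix j assume j: "j \<in> {1..n}"
      have "mu j < 0" using neg[OF j] .
      then show "mu j / (mu j - M) < - mu j / M"
        using Mpos t3 by auto
    qed (use ne in auto)
    also have "\<dots> = (\<Sum>j=1..n. - mu j) / M" by (rule sum_divide_distrib[symmetric])
    also have "(\<Sum>j=1..n. - mu j) = M" unfolding M_def by (simp add: sum_negf)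
    also have "M / M = 1" using Mpos by simp
    finally have "(\<Sum>j=1..n. mu j / (mu j - M)) < 1" .
    moreover have "\<forall>j\<in>{1..n}. mu j \<noteq> M" using neg Mpos by force
    ultimately show ?thesis using g_alt assms(1) by simp
  qed
  have cont: "isCont (gfun mu n) x" if "0 \<le> x" for x
  proof -
    have "\<forall>j\<in>{1..n}. mu j - x \<noteq> 0" using neg that by force
    then show ?thesis unfolding gfun_def[abs_def]
      by (intro continuous_intros) auto
  qed
  obtain z where z: "0 \<le> z" "z \<le> M" "gfun mu n z = 0"
    using IVT2[of "gfun mu n" M 0 0] gM g0 Mpos cont by auto
  have zpos: "mu n < z" using z assms(3) by linarith
  have bb: "bar_beta mu n = z"
    unfolding bar_beta_def
  proof (rule the_equality)
    show "mu n < z \<and> gfun mu n z = 0" using zpos z by simp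
    fix b assume b: "mu n < b \<and> gfun mu n b = 0"
    show "b = z"
    proof (rule ccontr)
      assume "b \<noteq> z"
      then consider "b < z" | "z < b" by linarith
      then show False
        using mono2[of b z] mono2[of z b] b z zpos by cases auto
    qed
  qed
  have fle: "ffun mu n \<beta> \<le> 0" if "\<beta> < mu 1 \<or> (mu n < \<beta> \<and> \<beta> < bar_beta mu n)" for \<beta>
    using that
  proof
    assume h: "\<beta> < mu 1"
    have "(\<Sum>j=1..n. mu j / (mu j - \<beta>)) < (\<Sum>j=1..n. 0)"
    proof (rule sum_strict_mono)
      fix j assume j: "j \<in> {1..n}"
      show "mu j / (mu j - \<beta>) < 0" using neg[OF j] mu1[OF j] h
        by (simp add: divide_neg_pos)
    qed (use ne in auto)
    moreover have "\<forall>j\<in>{1..n}. mu j \<noteq> \<beta>" using mu1 h by force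
    ultimately have "gfun mu n \<beta> < 1 - real n" using g_alt by simp
    then have "gfun mu n \<beta> < -2" using assms(1) by simp
    then show ?thesis unfolding ffun_def using t4 t5 by blast
  next
    assume h: "mu n < \<beta> \<and> \<beta> < bar_beta mu n"
    then have "gfun mu n \<beta> > 0" using mono2[of \<beta> z] bb z by simp
    then show ?thesis unfolding ffun_def using t4 t5 by blast
  qed
  have "filterlim lam at_top sequentially" using assms(4) unfolding eigen_seq_def by simp
  then have "eventually (\<lambda>k. lam k \<ge> 1) sequentially" by (simp add: filterlim_at_top)
  then obtain N where N: "\<And>k. k \<ge> N \<Longrightarrow> lam k \<ge> 1" by (auto simp: eventually_sequentially)
  let ?S1 = "\<lambda>k. {\<beta>. \<beta> < mu 1 \<and> ffun mu n \<beta> = lam k}"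
  let ?S2 = "\<lambda>k. {\<beta>. mu n < \<beta> \<and> ffun mu n \<beta> = lam k}"
  have fin1: "finite (?S1 k)" for k
    by (rule subsing_finite) (metis f_inj mono1 linorder_neqE_linordered_idom less_irrefl)
  have fin2: "finite (?S2 k)" for k
    by (rule subsing_finite) (metis f_inj mono2 linorder_neqE_linordered_idom less_irrefl)
  have "{\<beta>. (\<beta> < mu 1 \<or> (mu n < \<beta> \<and> \<beta> < bar_beta mu n))
                    \<and> (\<exists>k\<ge>1. ffun mu n \<beta> = lam k)} \<subseteq> (\<Union>k<N. ?S1 k \<union> ?S2 k)"
  proof
    fix \<beta> assume "\<beta> \<in> {\<beta>. (\<beta> < mu 1 \<or> (mu n < \<beta> \<and> \<beta> < bar_beta mu n))
                    \<and> (\<exists>k\<ge>1. ffun mu n \<beta> = lam k)}"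
    then obtain k where h: "\<beta> < mu 1 \<or> (mu n < \<beta> \<and> \<beta> < bar_beta mu n)" "ffun mu n \<beta> = lam k"
      by auto
    have "k < N" using fle[OF h(1)] h(2) N[of k] by force
    then show "\<beta> \<in> (\<Union>k<N. ?S1 k \<union> ?S2 k)" using h by blast
  qed
  moreover have "finite (\<Union>k<N. ?S1 k \<union> ?S2 k)" using fin1 fin2 by simp
  ultimately show ?thesis using finite_subset by blast
qed

end
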